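(* Let $d\ge 1$, $0<\alpha\le\beta<\infty$, $R>0$ and $\mathbb{A}\in L^\infty(\mathbb{R}^d,\mathcal{M}_{\alpha,\beta})$. Then the function $\mathcal{M}_{\alpha,\beta}\ni A\mapsto \mathrm{Tr}\left(G^{R,\mathbb{A}}(A)\right)$ is concave.
   Context: $\mathcal{M}_{\alpha,\beta}:=\{A\in\mathbb{R}^{d\times d}:\ A^T=A,\ \alpha|\xi|^2\le \xi^TA\xi\le\beta|\xi|^2 \text{ for all }\xi\in\mathbb{R}^d\}$ (a convex set). $B_R$ is the open ball of radius $R$ centered at $0$, $B:=B_1$, $\Gamma_R=\partial B_R$, and $n_R$ is the outward unit normal on $\Gamma_R$. Let $V:=\{v\in L^2_{\rm loc}(\mathbb{R}^d):\ \nabla v\in (L^2(\mathbb{R}^d))^d\}$ and $V_0:=\{v\in V:\ \int_B v=0\}$, a Hilbert space with scalar product $\int_{\mathbb{R}^d}\nabla v\cdot\nabla w$. For $A\in\mathcal{M}_{\alpha,\beta}$ define $\mathbb{A}_{R,A}(x)=\mathbb{A}(x)$ for $x\in B_R$ and $\mathbb{A}_{R,A}(x)=A$ for $x\in\mathbb{R}^d\setminus B_R$. For $p\in\mathbb{R}^d$, let $w_p^{R,\mathbb{A},A}$ be the unique solution in $V_0$ of $-\mathrm{div}\big(\mathbb{A}_{R,A}(p+\nabla w_p^{R,\mathbb{A},A})\big)=0$ in $\mathcal{D}'(\mathbb{R}^d)$; equivalently it is the unique minimizer over $V_0$ of $$J_p^{R,\mathbb{A},A}(v):=\frac{1}{2|B_R|}\int_{B_R}(p+\nabla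 v)^T\mathbb{A}(p+\nabla v)+\frac{1}{2|B_R|}\int_{\mathbb{R}^d\setminus B_R}(\nabla v)^TA\nabla v-\frac{1}{|B_R|}\int_{\Gamma_R}(Ap\cdot n_R)\,v .$$ Set $\mathcal{J}_p^{R,\mathbb{A}}(A):=\min_{v\in V_0}J_p^{R,\mathbb{A},A}(v)$. Then $G^{R,\mathbb{A}}(A)$ denotes the unique symmetric matrix in $\mathbb{R}^{d\times d}$ such that $\frac12 p^TG^{R,\mathbb{A}}(A)p=\mathcal{J}_p^{R,\mathbb{A}}(A)$ for all $p\in\mathbb{R}^d$. *)

theory Defs
  imports "HOL-Analysis.Analysis"
begin

definition partial_deriv :: "(real^'d \<Rightarrow> real) \<Rightarrow> 'd \<Rightarrow> real^'d \<Rightarrow> real" where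
  "partial_deriv f i x = frechet_derivative f (at x) (axis i 1)"

fun Ck :: "nat \<Rightarrow> (real^'d \<Rightarrow> real) \<Rightarrow> bool" where
  "Ck 0 f = continuous_on UNIV f"
| "Ck (Suc k) f = ((\<forall>x. f differentiable (at x)) \<and> (\<forall>i. Ck k (partial_deriv f i)))"

definition smooth_fun :: "(real^'d \<Rightarrow> real) \<Rightarrow> bool" where
  "smooth_fun f \<longleftrightarrow> (\<forall>k. Ck k f)"

definition test_function :: "(real^'d \<Rightarrow> real) \<Rightarrow> bool" where
  "test_function \<phi> \<longleftrightarrow> smooth_fun \<phi> \<and> compact (closure {x. \<phi> x \<noteq> 0})"

definition has_weak_gradient :: "(real^'d \<Rightarrow> real) \<Rightarrow> (real^'d \<Rightarrow> real^'d) \<Rightarrow> bool" where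
  "has_weak_gradient v g \<longleftrightarrow>
     v \<in> borel_measurable lebesgue \<and>
     (\<forall>r>0. set_integrable lebesgue (ball 0 r) (\<lambda>x. (v x)\<^sup>2)) \<and>
     g \<in> borel_measurable lebesgue \<and>
     integrable lebesgue (\<lambda>x. (norm (g x))\<^sup>2) \<and>
     (\<forall>\<phi> i. test_function \<phi> \<longrightarrow>
        (LINT x|lebesgue. v x * partial_deriv \<phi> i x) = - (LINT x|lebesgue. (g x $ i) * \<phi> x))"

definition in_V0 :: "(real^'d \<Rightarrow> real) \<Rightarrow> (real^'d \<Rightarrow> real^'d) \<Rightarrow> bool" where
  "in_V0 v g \<longleftrightarrow> has_weak_gradient v g \<and> (LINT x:ball 0 1|lebesgue. v x) = 0"

definition Mab :: "real \<Rightarrow> real \<Rightarrow> (real^'d^'d) set" where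
  "Mab \<alpha> \<beta> = {A. transpose A = A \<and>
     (\<forall>\<xi>. \<alpha> * (norm \<xi>)\<^sup>2 \<le> \<xi> \<bullet> (A *v \<xi>) \<and> \<xi> \<bullet> (A *v \<xi>) \<le> \<beta> * (norm \<xi>)\<^sup>2)}"

text \<open>The boundary term
  \<integral>_{\<Gamma>_R} (A p \<cdot> n_R) v is written, via the divergence theorem (div(Ap)=0), as
  \<integral>_{B_R} A p \<cdot> \<nabla>v.\<close>
definition Jfun :: "real \<Rightarrow> (real^'d \<Rightarrow> real^'d^'d) \<Rightarrow> real^'d^'d \<Rightarrow> real^'d
                     \<Rightarrow> (real^'d \<Rightarrow> real) \<Rightarrow> (real^'d \<Rightarrow> real^'d) \<Rightarrow> real" where
  "Jfun R \<A> A p v g =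
     (let m = measure lebesgue (ball (0::real^'d) R) in
       1 / (2 * m) * (LINT x:ball 0 R|lebesgue. (p + g x) \<bullet> (\<A> x *v (p + g x)))
     + 1 / (2 * m) * (LINT x:(UNIV - ball 0 R)|lebesgue. g x \<bullet> (A *v g x))
     - 1 / m * (LINT x:ball 0 R|lebesgue. (A *v p) \<bullet> g x))"

text \<open>\<J>_p^{R,\<A>}(A) = min over V_0 of J (the minimum is attained; we use the infimum).\<close>
definition Jmin :: "real \<Rightarrow> (real^'d \<Rightarrow> real^'d^'d) \<Rightarrow> real^'d \<Rightarrow> real^'d^'d \<Rightarrow> real" where
  "Jmin R \<A> p A = Inf {Jfun R \<A> A p v g | v g. in_V0 v g}"

definition Gmat :: "real \<Rightarrow> (real^'d \<Rightarrow> real^'d^'d) \<Rightarrow> real^'d^'d \<Rightarrow> real^'d^'d" where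
  "Gmat R \<A> A = (THE G. transpose G = G \<and> (\<forall>p. 1/2 * (p \<bullet> (G *v p)) = Jmin R \<A> p A))"

end

theory Submission
  imports Defs
begin


lemma additive_bounded_linear:
  fixes f :: "real \<Rightarrow> real"
  assumes add: "\<And>s t. f (s + t) = f s + f t"
    and bnd: "\<And>t. 0 \<le> t \<Longrightarrow> t \<le> 1 \<Longrightarrow> \<bar>f t\<bar> \<le> M"
  shows "f t = t * f 1"
proof -
  have f0: "f 0 = 0" using add[of 0 0] by simp
  have fneg: "f (- s) = - f s" for s using add[of s "-s"] f0 by simp
  have fnat: "f (real n * s) = real n * f s" for n s
    by (induction n) (auto simp: f0 distrib_right add)
  have fint: "f (of_int k) = of_int k * f 1" for k
  proof (cases "k \<ge> 0")
    case True
    then show ?thesis using fnat[of "nat k" 1] by simp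
  next
    case False
    then have "of_int k = - (real (nat (-k)) * 1)" by simp
    then show ?thesis using fnat[of "nat (-k)" 1] fneg False by simp
  qed
  have M0: "0 \<le> M" using bnd[of 0] by simp
  have key: "real n * \<bar>f t - t * f 1\<bar> \<le> M + \<bar>f 1\<bar>" for n
  proof -
    define k where "k = \<lfloor>real n * t\<rfloor>"
    define r where "r = real n * t - of_int k"
    have r: "0 \<le> r" "r \<le> 1" unfolding r_def k_def by linarith+
    have "f (real n * t) = f (of_int k) + f r" using add[of "of_int k" r] by (simp add: r_def)
    then have "real n * f t = of_int k * f 1 + f r" using fnat fint by simp
    moreover have "real n * (t * f 1) = of_int k * f 1 + r * f 1" by (simp add: r_def algebra_simps)
    ultimately have "real n * (f t - t * f 1) = f r - r * f 1" by (simp add: algebra_simps)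
    then have "real n * \<bar>f t - t * f 1\<bar> = \<bar>f r - r * f 1\<bar>" by (metis abs_mult abs_of_nat)
    also have "\<dots> \<le> \<bar>f r\<bar> + r * \<bar>f 1\<bar>"
    proof -
      have "\<bar>r * f 1\<bar> = r * \<bar>f 1\<bar>" using r by (simp add: abs_mult)
      then show ?thesis using abs_triangle_ineq4[of "f r" "r * f 1"] by linarith
    qed
    also have "\<dots> \<le> M + \<bar>f 1\<bar>" using bnd[OF r] r by (smt (verit) mult_left_le_one_le abs_ge_zero)
    finally show ?thesis .
  qed
  show ?thesis
  proof (rule ccontr)
    assume "f t \<noteq> t * f 1"
    then have d: "\<bar>f t - t * f 1\<bar> > 0" by simp
    obtain n :: nat where n: "real n > (M + \<bar>f 1\<bar> + 1) / \<bar>f t - t * f 1\<bar>"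
      using reals_Archimedean2 by blast
    then have "real n * \<bar>f t - t * f 1\<bar> > M + \<bar>f 1\<bar> + 1" using d by (simp add: field_simps)
    with key[of n] show False by simp
  qed
qed

lemma aux_lin: "(a::real) + c = 2 * b + 2 * d \<Longrightarrow> a' + c = 2 * b' + 2 * d' \<Longrightarrow> a - a' = 2 * (b - b') + 2 * (d - d')"
  by argo

lemma quad_form_exists:
  fixes q :: "real^'d \<Rightarrow> real"
  assumes par: "\<And>x y. q (x + y) + q (x - y) = 2 * q x + 2 * q y"
    and bnd: "\<And>x. \<bar>q x\<bar> \<le> K * (norm x)\<^sup>2"
  shows "\<exists>G. transpose G = G \<and> (\<forall>p. 1/2 * (p \<bullet> (G *v p)) = q p)"
proof -
  define B where "B x y = (q (x + y) - q (x - y)) / 4" for x y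
  have q0: "q 0 = 0" using par[of 0 0] by simp
  have qneg: "q (- y) = q y" for y using par[of 0 y] q0 by simp
  have q2: "q (x + x) = 4 * q x" for x using par[of x x] q0 by simp
  have Bsym: "B y x = B x y" for x y
    unfolding B_def using qneg[of "x - y"] by (simp add: add.commute)
  have Bx0: "B x 0 = 0" for x by (simp add: B_def)
  have step: "4 * B (x + x) (y + z) = 8 * (B x y + B x z)" for x y z
  proof -
    have e1: "q ((x + x) + (y + z)) + q (y - z) = 2 * q (x + y) + 2 * q (x + z)"
      using par[of "x + y" "x + z"] by (simp add: algebra_simps)
    have e2: "q ((x + x) - (y + z)) + q (y - z) = 2 * q (x - y) + 2 * q (x - z)"
      using par[of "x - y" "x - z"] qneg[of "y - z"] by (simp add: algebra_simps)
    have "q ((x + x) + (y + z)) - q ((x + x) - (y + z)) = 2 * (q (x + y) - q (x - y)) + 2 * (q (x + z) - q (x - z))"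
      using aux_lin[OF e1 e2] .
    then show ?thesis unfolding B_def by argo
  qed
  have Bdbl: "B (x + x) y = 2 * B x y" for x y using step[of x y 0] Bx0 by simp
  have Badd: "B x (y + z) = B x y + B x z" for x y z using step[of x y z] Bdbl by simp
  have Bhom: "B x (t *\<^sub>R y) = t * B x y" for x y t
  proof -
    define f where "f t = B x (t *\<^sub>R y)" for t
    have "f t = t * f 1"
    proof (rule additive_bounded_linear)
      show "f (s + t) = f s + f t" for s t unfolding f_def by (simp add: scaleR_add_left Badd)
      show "\<bar>f t\<bar> \<le> \<bar>K\<bar> * (norm x + norm y)\<^sup>2 / 2" if "0 \<le> t" "t \<le> 1" for t
      proof -
        have ty: "t * norm y \<le> norm y" using that mult_left_le_one_le[of "norm y" t] by simp
        have n1: "norm (x + t *\<^sub>R y) \<le> norm x + norm y"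
          using norm_triangle_ineq[of x "t *\<^sub>R y"] that ty by simp
        have n2: "norm (x - t *\<^sub>R y) \<le> norm x + norm y"
          using norm_triangle_ineq4[of x "t *\<^sub>R y"] that ty by simp
        have K0: "0 \<le> \<bar>K\<bar>" by simp
        have bnd': "\<bar>q u\<bar> \<le> \<bar>K\<bar> * (norm u)\<^sup>2" for u
          using bnd[of u] by (smt (verit) mult_right_mono zero_le_power2)
        have "\<bar>q (x + t *\<^sub>R y)\<bar> \<le> \<bar>K\<bar> * (norm x + norm y)\<^sup>2"
          using bnd'[of "x + t *\<^sub>R y"] n1 K0 by (meson mult_left_mono norm_ge_zero order_trans power_mono)
        moreover have "\<bar>q (x - t *\<^sub>R y)\<bar> \<le> \<bar>K\<bar> * (norm x + norm y)\<^sup>2"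
          using bnd'[of "x - t *\<^sub>R y"] n2 K0 by (meson mult_left_mono norm_ge_zero order_trans power_mono)
        ultimately show ?thesis unfolding f_def B_def by (simp add: abs_le_iff)
      qed
    qed
    then show ?thesis by (simp add: f_def)
  qed
  have linB: "linear (B x)" for x
    by (rule linearI) (simp_all add: Badd Bhom)
  have linB2: "linear (\<lambda>x. B x y)" for y
    by (rule linearI) (simp_all add: Bsym[of _ y] Badd Bhom)
  have qB: "q x = B x x" for x unfolding B_def using q2[of x] q0 by simp
  have exp: "(\<Sum>i\<in>UNIV. (x $ i) *\<^sub>R axis i 1) = x" for x :: "real^'d"
    using basis_expansion[of x] by (simp add: scalar_mult_eq_scaleR)
  define G :: "real^'d^'d" where "G = (\<chi> i j. 2 * B (axis i 1) (axis j 1))"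
  have "transpose G = G" unfolding G_def transpose_def by (simp add: vec_eq_iff Bsym)
  moreover have "1/2 * (p \<bullet> (G *v p)) = q p" for p
  proof -
    have "B p p = (\<Sum>i\<in>UNIV. p $ i * (\<Sum>j\<in>UNIV. p $ j * B (axis i 1) (axis j 1)))"
    proof -
      have "B p p = B (\<Sum>i\<in>UNIV. (p $ i) *\<^sub>R axis i 1) p" using exp[of p] by simp
      also have "\<dots> = (\<Sum>i\<in>UNIV. p $ i * B (axis i 1) p)"
        by (simp add: linear_sum[OF linB2[of p]] linear_scale[OF linB2[of p]])
      also have "\<dots> = (\<Sum>i\<in>UNIV. p $ i * B (axis i 1) (\<Sum>j\<in>UNIV. (p $ j) *\<^sub>R axis j 1))"
        using exp[of p] by simp
      also have "\<dots> = (\<Sum>i\<in>UNIV. p $ i * (\<Sum>j\<in>UNIV. p $ j * B (axis i 1) (axis j 1)))"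
        by (simp add: linear_sum[OF linB] linear_scale[OF linB])
      finally show ?thesis .
    qed
    moreover have "p \<bullet> (G *v p) = (\<Sum>i\<in>UNIV. p $ i * (\<Sum>j\<in>UNIV. 2 * B (axis i 1) (axis j 1) * p $ j))"
      unfolding G_def by (simp add: inner_vec_def matrix_vector_mult_def)
    ultimately show ?thesis using qB[of p]
      by (simp add: sum_distrib_left sum_divide_distrib algebra_simps)
  qed
  ultimately show ?thesis by blast
qed

lemma sym_quad_unique:
  fixes G1 G2 :: "real^'d^'d"
  assumes "transpose G1 = G1" "transpose G2 = G2"
    and eq: "\<And>p. p \<bullet> (G1 *v p) = p \<bullet> (G2 *v p)"
  shows "G1 = G2"
proof -
  define H where "H = G1 - G2"
  have tH: "transpose H = H" using assms by (simp add: H_def transpose_def vec_eq_iff)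
  have Hq: "p \<bullet> (H *v p) = 0" for p using eq[of p]
    by (simp add: H_def matrix_vector_mult_diff_rdistrib inner_diff_right)
  have symH: "x \<bullet> (H *v y) = y \<bullet> (H *v x)" for x y
  proof -
    have "x \<bullet> (H *v y) = (transpose H *v x) \<bullet> y"
      by (metis inner_commute vector_transpose_matrix dot_lmul_matrix)
    then show ?thesis using tH by (simp add: inner_commute)
  qed
  have H0: "x \<bullet> (H *v y) = 0" for x y
  proof -
    have "(x + y) \<bullet> (H *v (x + y)) = x \<bullet> (H *v x) + 2 * (x \<bullet> (H *v y)) + y \<bullet> (H *v y)"
      using symH[of y x] by (simp add: matrix_vector_right_distrib inner_add_left inner_add_right)
    then show ?thesis using Hq[of "x+y"] Hq[of x] Hq[of y] by simp
  qed
  have "H *v y = 0" for y by (metis H0 inner_eq_zero_iff)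
  then have "H = 0" by (simp add: matrix_eq)
  then show ?thesis by (simp add: H_def)
qed




lemma ball_meas: "ball (0::real^'d) R \<in> sets lebesgue" "emeasure lebesgue (ball (0::real^'d) R) < \<infinity>"
  using lmeasurable_ball[of "0::real^'d" R] by (auto simp: fmeasurable_def)

lemma ball_measure_pos: "0 < R \<Longrightarrow> 0 < measure lebesgue (ball (0::real^'d) R)"
  using content_ball_pos[of R "0::real^'d"] by simp

lemma integrable_ind_ball: "integrable lebesgue (indicator (ball (0::real^'d) r) :: _ \<Rightarrow> real)"
  using ball_meas by (rule integrable_real_indicator)

lemma test_fun_props:
  fixes \<phi> :: "real^'d \<Rightarrow> real"
  assumes "test_function \<phi>"
  shows "continuous_on UNIV \<phi>" "continuous_on UNIV (partial_deriv \<phi> i)"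
    "compact (closure {x. \<phi> x \<noteq> 0})"
    "\<And>x. x \<notin> closure {x. \<phi> x \<noteq> 0} \<Longrightarrow> \<phi> x = 0"
    "\<And>x. x \<notin> closure {x. \<phi> x \<noteq> 0} \<Longrightarrow> partial_deriv \<phi> i x = 0"
proof -
  have sm: "\<And>k. Ck k \<phi>" using assms by (simp add: test_function_def smooth_fun_def)
  show "continuous_on UNIV \<phi>" using sm[of 0] by simp
  show "continuous_on UNIV (partial_deriv \<phi> i)" using sm[of "Suc 0"] by simp
  show "compact (closure {x. \<phi> x \<noteq> 0})" using assms by (simp add: test_function_def)
  show z: "\<phi> x = 0" if "x \<notin> closure {x. \<phi> x \<noteq> 0}" for x
  proof (rule ccontr)
    assume "\<phi> x \<noteq> 0"
    then have "x \<in> {x. \<phi> x \<noteq> 0}" by simp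
    then show False using that closure_subset[of "{x. \<phi> x \<noteq> 0}"] by (simp add: subset_iff)
  qed
  show "partial_deriv \<phi> i x = 0" if x: "x \<notin> closure {x. \<phi> x \<noteq> 0}" for x
  proof -
    define U where "U = - closure {x. \<phi> x \<noteq> 0}"
    have U1: "open U" unfolding U_def by blast
    have U2: "x \<in> U" unfolding U_def using x by simp
    have U3: "\<phi> y = 0" if "y \<in> U" for y
      by (rule z) (use that in \<open>simp add: U_def\<close>)
    have "((\<lambda>_. 0::real) has_derivative (\<lambda>_. 0)) (at x)" by (rule has_derivative_const)
    then have "(\<phi> has_derivative (\<lambda>_. 0)) (at x)"
      by (rule has_derivative_transform_within_open[OF _ U1 U2]) (simp add: U3)
    then have "frechet_derivative \<phi> (at x) = (\<lambda>_. 0)" by (rule frechet_derivative_at[symmetric])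
    then show ?thesis by (simp add: partial_deriv_def)
  qed
qed

lemma cont_compact_bounded:
  fixes h :: "real^'d \<Rightarrow> real"
  assumes "continuous_on UNIV h" "compact K" "\<And>x. x \<notin> K \<Longrightarrow> h x = 0"
  obtains M where "\<And>x. \<bar>h x\<bar> \<le> M"
proof -
  have "compact (h ` K)" using assms(1,2) by (meson compact_continuous_image continuous_on_subset subset_UNIV)
  then obtain M where "\<And>y. y \<in> h ` K \<Longrightarrow> norm y \<le> M"
    using compact_imp_bounded bounded_iff by metis
  then have "\<bar>h x\<bar> \<le> max M 0" for x using assms(3)[of x] by (cases "x \<in> K") force+
  then show ?thesis using that by blast
qed

lemma abs_le_1_sq: "\<bar>a::real\<bar> \<le> 1 + a\<^sup>2"
proof (cases "\<bar>a\<bar> \<le> 1")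
  case False
  then have "\<bar>a\<bar> * 1 \<le> \<bar>a\<bar> * \<bar>a\<bar>" by (intro mult_left_mono) auto
  then show ?thesis by (simp add: power2_eq_square abs_mult[symmetric])
qed (smt (verit) zero_le_power2)

lemma L2loc_integrable:
  fixes f h :: "real^'d \<Rightarrow> real"
  assumes f: "f \<in> borel_measurable lebesgue" "\<And>r. r > 0 \<Longrightarrow> set_integrable lebesgue (ball 0 r) (\<lambda>x. (f x)\<^sup>2)"
    and h: "h \<in> borel_measurable lebesgue" "\<And>x. \<bar>h x\<bar> \<le> M" "compact K" "\<And>x. x \<notin> K \<Longrightarrow> h x = 0"
  shows "integrable lebesgue (\<lambda>x. f x * h x)"
proof -
  obtain r where r: "r > 0" "K \<subseteq> ball 0 r"
    using compact_imp_bounded[OF h(3)] bounded_subset_ballD by blast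
  have i1: "integrable lebesgue (\<lambda>x. indicator (ball 0 r) x * (f x)\<^sup>2)"
    using f(2)[OF r(1)] by (simp add: set_integrable_def)
  have "integrable lebesgue (\<lambda>x. \<bar>M\<bar> * (indicator (ball 0 r) x + indicator (ball 0 r) x * (f x)\<^sup>2))"
    by (intro integrable_mult_right Bochner_Integration.integrable_add integrable_ind_ball i1)
  then show ?thesis
  proof (rule Bochner_Integration.integrable_bound)
    show "(\<lambda>x. f x * h x) \<in> borel_measurable lebesgue" using f(1) h(1) by (rule borel_measurable_times)
    show "AE x in lebesgue. norm (f x * h x) \<le> norm (\<bar>M\<bar> * (indicator (ball 0 r) x + indicator (ball 0 r) x * (f x)\<^sup>2))"
    proof (rule AE_I2)
      fix x
      show "norm (f x * h x) \<le> norm (\<bar>M\<bar> * (indicator (ball 0 r) x + indicator (ball 0 r) x * (f x)\<^sup>2))"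
      proof (cases "x \<in> ball 0 r")
        case True
        have "\<bar>h x\<bar> \<le> \<bar>M\<bar>" using h(2)[of x] by linarith
        then have "\<bar>f x\<bar> * \<bar>h x\<bar> \<le> (1 + (f x)\<^sup>2) * \<bar>M\<bar>"
          using abs_le_1_sq[of "f x"] by (intro mult_mono) auto
        then show ?thesis using True by (simp add: abs_mult algebra_simps)
      next
        case False
        then have "x \<notin> K" using r by blast
        then show ?thesis using h(4)[of x] by simp
      qed
    qed
  qed
qed




lemma cont_meas_leb: "continuous_on UNIV (f :: real^'d \<Rightarrow> real) \<Longrightarrow> f \<in> borel_measurable lebesgue"
  using continuous_imp_measurable_on_sets_lebesgue[of UNIV f] by simp

lemma comp_meas: "g \<in> borel_measurable M \<Longrightarrow> (\<lambda>x. (g x :: real^'d) $ i) \<in> borel_measurable M"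
  by (rule measurable_compose[OF _ borel_measurable_nth])

lemma ind_meas: "(\<lambda>x. indicat_real (ball (0::real^'d) r) x) \<in> borel_measurable lebesgue"
  using borel_measurable_indicator[OF ball_meas(1)[of r]] by simp

lemma hwg_facts:
  fixes v :: "real^'d \<Rightarrow> real"
  assumes "has_weak_gradient v g"
  shows "v \<in> borel_measurable lebesgue" "g \<in> borel_measurable lebesgue"
    "integrable lebesgue (\<lambda>x. (norm (g x))\<^sup>2)"
    "\<And>r. r > 0 \<Longrightarrow> set_integrable lebesgue (ball 0 r) (\<lambda>x. (v x)\<^sup>2)"
    "\<And>\<phi> i. test_function \<phi> \<Longrightarrow> (LINT x|lebesgue. v x * partial_deriv \<phi> i x) = - (LINT x|lebesgue. (g x $ i) * \<phi> x)"
  using assms by (auto simp: has_weak_gradient_def)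

lemma comp_L2:
  fixes g :: "real^'d \<Rightarrow> real^'d"
  assumes "g \<in> borel_measurable lebesgue" "integrable lebesgue (\<lambda>x. (norm (g x))\<^sup>2)"
  shows "set_integrable lebesgue (ball 0 r) (\<lambda>x. (g x $ i)\<^sup>2)"
  unfolding set_integrable_def
proof (rule Bochner_Integration.integrable_bound[OF assms(2)])
  show "(\<lambda>x. indicat_real (ball 0 r) x *\<^sub>R (g x $ i)\<^sup>2) \<in> borel_measurable lebesgue"
    using ind_meas comp_meas[OF assms(1), of i] by measurable
  show "AE x in lebesgue. norm (indicat_real (ball 0 r) x *\<^sub>R (g x $ i)\<^sup>2) \<le> norm ((norm (g x))\<^sup>2)"
  proof (rule AE_I2)
    fix x
    have "(g x $ i)\<^sup>2 \<le> (norm (g x))\<^sup>2"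
      using component_le_norm_cart[of "g x" i] by (metis abs_ge_zero power2_abs power_mono)
    then show "norm (indicat_real (ball 0 r) x *\<^sub>R (g x $ i)\<^sup>2) \<le> norm ((norm (g x))\<^sup>2)"
      by (simp add: indicator_def)
  qed
qed

lemma test_integrable:
  fixes v :: "real^'d \<Rightarrow> real"
  assumes "has_weak_gradient v g" "test_function \<phi>"
  shows "integrable lebesgue (\<lambda>x. v x * partial_deriv \<phi> i x)"
    "integrable lebesgue (\<lambda>x. g x $ i * \<phi> x)"
proof -
  note T = test_fun_props[OF assms(2)]
  note H = hwg_facts[OF assms(1)]
  obtain M1 where M1: "\<And>x. \<bar>partial_deriv \<phi> i x\<bar> \<le> M1"
    using cont_compact_bounded[OF T(2) T(3) T(5)] by blast
  obtain M2 where M2: "\<And>x. \<bar>\<phi> x\<bar> \<le> M2"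
    using cont_compact_bounded[OF T(1) T(3) T(4)] by blast
  show "integrable lebesgue (\<lambda>x. v x * partial_deriv \<phi> i x)"
    by (rule L2loc_integrable[OF H(1) H(4) cont_meas_leb[OF T(2)] M1 T(3) T(5)])
  have gi: "(\<lambda>x. g x $ i) \<in> borel_measurable lebesgue" using comp_meas[OF H(2)] .
  show "integrable lebesgue (\<lambda>x. g x $ i * \<phi> x)"
    by (rule L2loc_integrable[OF gi comp_L2[OF H(2) H(3)] cont_meas_leb[OF T(1)] M2 T(3) T(4)])
qed

lemma sq_comb_le: "(a * x + b * y)\<^sup>2 \<le> 2 * a\<^sup>2 * x\<^sup>2 + 2 * b\<^sup>2 * (y::real)\<^sup>2"
proof -
  have "0 \<le> (a * x - b * y)\<^sup>2" by simp
  then show ?thesis by (simp add: power2_eq_square algebra_simps)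
qed

lemma hwg_comb:
  fixes v w :: "real^'d \<Rightarrow> real"
  assumes hv: "has_weak_gradient v g" and hw: "has_weak_gradient w h"
  shows "has_weak_gradient (\<lambda>x. a * v x + b * w x) (\<lambda>x. a *\<^sub>R g x + b *\<^sub>R h x)"
proof -
  note V = hwg_facts[OF hv] and W = hwg_facts[OF hw]
  have m1: "(\<lambda>x. a * v x + b * w x) \<in> borel_measurable lebesgue" using V(1) W(1) by measurable
  have m2: "(\<lambda>x. a *\<^sub>R g x + b *\<^sub>R h x) \<in> borel_measurable lebesgue" using V(2) W(2) by measurable
  have l2: "set_integrable lebesgue (ball 0 r) (\<lambda>x. (a * v x + b * w x)\<^sup>2)" if r: "r > 0" for r
  proof (rule set_integrable_bound)
    show "set_integrable lebesgue (ball 0 r) (\<lambda>x. 2 * a\<^sup>2 * (v x)\<^sup>2 + 2 * b\<^sup>2 * (w x)\<^sup>2)"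
      using V(4)[OF r] W(4)[OF r] by (intro set_integral_add(1) set_integrable_mult_right) auto
    show "set_borel_measurable lebesgue (ball 0 r) (\<lambda>x. (a * v x + b * w x)\<^sup>2)"
      unfolding set_borel_measurable_def using m1 ind_meas[of r] by measurable
    show "AE x in lebesgue. x \<in> ball 0 r \<longrightarrow> norm ((a * v x + b * w x)\<^sup>2) \<le> norm (2 * a\<^sup>2 * (v x)\<^sup>2 + 2 * b\<^sup>2 * (w x)\<^sup>2)"
      using sq_comb_le by (intro AE_I2) simp
  qed
  have gn: "integrable lebesgue (\<lambda>x. (norm (a *\<^sub>R g x + b *\<^sub>R h x))\<^sup>2)"
  proof (rule Bochner_Integration.integrable_bound)
    show "integrable lebesgue (\<lambda>x. 2 * a\<^sup>2 * (norm (g x))\<^sup>2 + 2 * b\<^sup>2 * (norm (h x))\<^sup>2)"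
      using V(3) W(3) by auto
    show "(\<lambda>x. (norm (a *\<^sub>R g x + b *\<^sub>R h x))\<^sup>2) \<in> borel_measurable lebesgue" using m2 by measurable
    show "AE x in lebesgue. norm ((norm (a *\<^sub>R g x + b *\<^sub>R h x))\<^sup>2) \<le> norm (2 * a\<^sup>2 * (norm (g x))\<^sup>2 + 2 * b\<^sup>2 * (norm (h x))\<^sup>2)"
    proof (rule AE_I2)
      fix x
      have "norm (a *\<^sub>R g x + b *\<^sub>R h x) \<le> \<bar>a\<bar> * norm (g x) + \<bar>b\<bar> * norm (h x)"
        using norm_triangle_ineq[of "a *\<^sub>R g x" "b *\<^sub>R h x"] by simp
      then have "(norm (a *\<^sub>R g x + b *\<^sub>R h x))\<^sup>2 \<le> (\<bar>a\<bar> * norm (g x) + \<bar>b\<bar> * norm (h x))\<^sup>2"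
        by (intro power_mono) auto
      also have "\<dots> \<le> 2 * \<bar>a\<bar>\<^sup>2 * (norm (g x))\<^sup>2 + 2 * \<bar>b\<bar>\<^sup>2 * (norm (h x))\<^sup>2" by (rule sq_comb_le)
      finally show "norm ((norm (a *\<^sub>R g x + b *\<^sub>R h x))\<^sup>2) \<le> norm (2 * a\<^sup>2 * (norm (g x))\<^sup>2 + 2 * b\<^sup>2 * (norm (h x))\<^sup>2)"
        by simp
    qed
  qed
  have wd: "(LINT x|lebesgue. (a * v x + b * w x) * partial_deriv \<phi> i x) =
      - (LINT x|lebesgue. ((a *\<^sub>R g x + b *\<^sub>R h x) $ i) * \<phi> x)" if phi: "test_function \<phi>" for \<phi> i
  proof -
    note iv = test_integrable[OF hv phi, of i] and iw = test_integrable[OF hw phi, of i]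
    have "(LINT x|lebesgue. (a * v x + b * w x) * partial_deriv \<phi> i x)
        = (LINT x|lebesgue. a * (v x * partial_deriv \<phi> i x) + b * (w x * partial_deriv \<phi> i x))"
      by (simp add: algebra_simps)
    also have "\<dots> = a * (LINT x|lebesgue. v x * partial_deriv \<phi> i x) + b * (LINT x|lebesgue. w x * partial_deriv \<phi> i x)"
      using iv(1) iw(1) by simp
    also have "\<dots> = a * (- (LINT x|lebesgue. (g x $ i) * \<phi> x)) + b * (- (LINT x|lebesgue. (h x $ i) * \<phi> x))"
      using V(5)[OF phi] W(5)[OF phi] by simp
    also have "\<dots> = - (LINT x|lebesgue. a * ((g x $ i) * \<phi> x) + b * ((h x $ i) * \<phi> x))"
      using iv(2) iw(2) by simp
    also have "\<dots> = - (LINT x|lebesgue. ((a *\<^sub>R g x + b *\<^sub>R h x) $ i) * \<phi> x)"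
      by (simp add: algebra_simps)
    finally show ?thesis .
  qed
  show ?thesis unfolding has_weak_gradient_def using m1 m2 l2 gn wd by blast
qed

lemma V0_comb:
  fixes v w :: "real^'d \<Rightarrow> real"
  assumes "in_V0 v g" "in_V0 w h"
  shows "in_V0 (\<lambda>x. a * v x + b * w x) (\<lambda>x. a *\<^sub>R g x + b *\<^sub>R h x)"
proof -
  have hv: "has_weak_gradient v g" and hw: "has_weak_gradient w h"
    and mv: "(LINT x:ball 0 1|lebesgue. v x) = 0" and mw: "(LINT x:ball 0 1|lebesgue. w x) = 0"
    using assms by (auto simp: in_V0_def)
  have si: "set_integrable lebesgue (ball 0 1) u" if hu: "has_weak_gradient u k" for u :: "real^'d \<Rightarrow> real" and k
  proof (rule set_integrable_bound)
    note U = hwg_facts[OF hu]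
    show "set_integrable lebesgue (ball 0 1) (\<lambda>x. 1 + (u x)\<^sup>2)"
    proof -
      have a: "integrable lebesgue (\<lambda>x. indicat_real (ball (0::real^'d) 1) x)"
        using integrable_ind_ball[of 1] by simp
      have b: "integrable lebesgue (\<lambda>x. indicat_real (ball 0 1) x * (u x)\<^sup>2)"
        using U(4)[of 1] unfolding set_integrable_def by simp
      show ?thesis using Bochner_Integration.integrable_add[OF a b] unfolding set_integrable_def
        by (simp add: distrib_left)
    qed
    show "set_borel_measurable lebesgue (ball 0 1) u"
      unfolding set_borel_measurable_def using U(1) ind_meas[of 1] by measurable
    show "AE x in lebesgue. x \<in> ball 0 1 \<longrightarrow> norm (u x) \<le> norm (1 + (u x)\<^sup>2)"
      using abs_le_1_sq by (intro AE_I2) (simp add: add_nonneg_nonneg)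
  qed
  have "(LINT x:ball 0 1|lebesgue. a * v x + b * w x) = a * 0 + b * 0"
    using si[OF hv] si[OF hw] mv mw by (simp add: set_integral_add(2))
  then show ?thesis unfolding in_V0_def using hwg_comb[OF hv hw] by simp
qed

lemma V0_zero: "in_V0 (\<lambda>x. 0) (\<lambda>x. 0 :: real^'d)"
  by (simp add: in_V0_def has_weak_gradient_def set_integrable_def)




lemma vec_meas:
  fixes f :: "'a \<Rightarrow> real^'n"
  assumes "\<And>j. (\<lambda>x. f x $ j) \<in> borel_measurable M"
  shows "f \<in> borel_measurable M"
proof (rule borel_measurable_euclidean_space[THEN iffD2], rule ballI)
  fix b :: "real^'n" assume "b \<in> Basis"
  then obtain j where b: "b = axis j 1" using axis_inverse by blast
  show "(\<lambda>x. f x \<bullet> b) \<in> borel_measurable M" using assms[of j] by (simp add: b inner_axis)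
qed

lemma nth_meas: "g \<in> borel_measurable M \<Longrightarrow> (\<lambda>x. (g x :: 'b::real_normed_vector^'d) $ i) \<in> borel_measurable M"
  by (rule measurable_compose[OF _ borel_measurable_continuous_onI[OF linear_continuous_on[OF bounded_linear_vec_nth]]])

lemma mv_meas:
  fixes F :: "'a \<Rightarrow> real^'n^'m" and u :: "'a \<Rightarrow> real^'n"
  assumes "F \<in> borel_measurable M" "u \<in> borel_measurable M"
  shows "(\<lambda>x. F x *v u x) \<in> borel_measurable M"
proof (rule vec_meas)
  fix j
  have Fj: "(\<lambda>x. F x $ j) \<in> borel_measurable M" by (rule nth_meas[OF assms(1)])
  have Fjk: "(\<lambda>x. F x $ j $ k) \<in> borel_measurable M" for k by (rule measurable_compose[OF Fj borel_measurable_nth])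
  have uk: "(\<lambda>x. u x $ k) \<in> borel_measurable M" for k by (rule measurable_compose[OF assms(2) borel_measurable_nth])
  have "(\<lambda>x. \<Sum>k\<in>UNIV. F x $ j $ k * u x $ k) \<in> borel_measurable M"
    using Fjk uk by (intro borel_measurable_sum borel_measurable_times) auto
  then show "(\<lambda>x. (F x *v u x) $ j) \<in> borel_measurable M"
    by (simp add: matrix_vector_mult_def)
qed

lemma Mab_bnd:
  assumes "M \<in> Mab \<alpha> \<beta>"
  shows "\<alpha> * (norm u)\<^sup>2 \<le> u \<bullet> (M *v u)" "u \<bullet> (M *v u) \<le> \<beta> * (norm u)\<^sup>2"
  using assms by (auto simp: Mab_def)

lemma sq_sum_le: "((a::real) + b)\<^sup>2 \<le> 2 * a\<^sup>2 + 2 * b\<^sup>2"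
  using sq_comb_le[of 1 a 1 b] by simp

lemma I1_int:
  fixes g :: "real^'d \<Rightarrow> real^'d"
  assumes ab: "0 < \<alpha>" "\<alpha> \<le> \<beta>"
    and AM: "\<A> \<in> borel_measurable lebesgue" "AE x in lebesgue. \<A> x \<in> Mab \<alpha> \<beta>"
    and g: "g \<in> borel_measurable lebesgue" "integrable lebesgue (\<lambda>x. (norm (g x))\<^sup>2)"
  shows "set_integrable lebesgue (ball 0 R) (\<lambda>x. (p + g x) \<bullet> (\<A> x *v (p + g x)))"
proof (rule set_integrable_bound)
  have a: "integrable lebesgue (\<lambda>x. indicat_real (ball (0::real^'d) R) x * (2 * \<beta> * (norm p)\<^sup>2))"
    by (rule integrable_mult_left) (rule integrable_ind_ball)
  have b: "integrable lebesgue (\<lambda>x. indicat_real (ball (0::real^'d) R) x * (2 * \<beta> * (norm (g x))\<^sup>2))"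
    using integrable_mult_indicator[OF ball_meas(1)[of R], of "\<lambda>x. 2 * \<beta> * (norm (g x))\<^sup>2"] g(2) by simp
  show "set_integrable lebesgue (ball 0 R) (\<lambda>x. 2 * \<beta> * (norm p)\<^sup>2 + 2 * \<beta> * (norm (g x))\<^sup>2)"
    using Bochner_Integration.integrable_add[OF a b] unfolding set_integrable_def by (simp add: distrib_left)
  have m: "(\<lambda>x. (p + g x) \<bullet> (\<A> x *v (p + g x))) \<in> borel_measurable lebesgue"
  proof -
    have pg: "(\<lambda>x. p + g x) \<in> borel_measurable lebesgue" using g(1) by measurable
    show ?thesis using pg mv_meas[OF AM(1) pg] by (rule borel_measurable_inner)
  qed
  show "set_borel_measurable lebesgue (ball 0 R) (\<lambda>x. (p + g x) \<bullet> (\<A> x *v (p + g x)))"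
    unfolding set_borel_measurable_def using m ind_meas[of R] by measurable
  show "AE x in lebesgue. x \<in> ball 0 R \<longrightarrow> norm ((p + g x) \<bullet> (\<A> x *v (p + g x))) \<le> norm (2 * \<beta> * (norm p)\<^sup>2 + 2 * \<beta> * (norm (g x))\<^sup>2)"
    using AM(2)
  proof eventually_elim
    case (elim x)
    note B = Mab_bnd[OF elim, of "p + g x"]
    have "0 \<le> \<alpha> * (norm (p + g x))\<^sup>2" using ab by simp
    then have "\<bar>(p + g x) \<bullet> (\<A> x *v (p + g x))\<bar> \<le> \<beta> * (norm (p + g x))\<^sup>2" using B by linarith
    also have "\<dots> \<le> \<beta> * (norm p + norm (g x))\<^sup>2"
      using ab by (intro mult_left_mono power_mono norm_triangle_ineq) auto
    also have "\<dots> \<le> \<beta> * (2 * (norm p)\<^sup>2 + 2 * (norm (g x))\<^sup>2)"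
      using ab by (intro mult_left_mono sq_sum_le) auto
    finally show ?case using ab by (simp add: algebra_simps)
  qed
qed

lemma I2_int:
  fixes g :: "real^'d \<Rightarrow> real^'d"
  assumes ab: "0 < \<alpha>" "\<alpha> \<le> \<beta>" and A: "A \<in> Mab \<alpha> \<beta>"
    and g: "g \<in> borel_measurable lebesgue" "integrable lebesgue (\<lambda>x. (norm (g x))\<^sup>2)"
  shows "integrable lebesgue (\<lambda>x. g x \<bullet> (A *v g x))"
proof (rule Bochner_Integration.integrable_bound)
  show "integrable lebesgue (\<lambda>x. \<beta> * (norm (g x))\<^sup>2)" using g(2) by simp
  show "(\<lambda>x. g x \<bullet> (A *v g x)) \<in> borel_measurable lebesgue"
    using g(1) mv_meas[OF borel_measurable_const g(1), of A] by (rule borel_measurable_inner)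
  show "AE x in lebesgue. norm (g x \<bullet> (A *v g x)) \<le> norm (\<beta> * (norm (g x))\<^sup>2)"
  proof (rule AE_I2)
    fix x
    note B = Mab_bnd[OF A, of "g x"]
    have "0 \<le> \<alpha> * (norm (g x))\<^sup>2" using ab by simp
    then show "norm (g x \<bullet> (A *v g x)) \<le> norm (\<beta> * (norm (g x))\<^sup>2)" using B by auto
  qed
qed

lemma I3_int:
  fixes g :: "real^'d \<Rightarrow> real^'d"
  assumes g: "g \<in> borel_measurable lebesgue" "integrable lebesgue (\<lambda>x. (norm (g x))\<^sup>2)"
  shows "set_integrable lebesgue (ball 0 R) (\<lambda>x. c \<bullet> g x)"
proof (rule set_integrable_bound)
  have a: "integrable lebesgue (\<lambda>x. indicat_real (ball (0::real^'d) R) x * norm c)"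
    by (rule integrable_mult_left) (rule integrable_ind_ball)
  have b: "integrable lebesgue (\<lambda>x. indicat_real (ball (0::real^'d) R) x * (norm c * (norm (g x))\<^sup>2))"
    using integrable_mult_indicator[OF ball_meas(1)[of R], of "\<lambda>x. norm c * (norm (g x))\<^sup>2"] g(2) by simp
  show "set_integrable lebesgue (ball 0 R) (\<lambda>x. norm c + norm c * (norm (g x))\<^sup>2)"
    using Bochner_Integration.integrable_add[OF a b] unfolding set_integrable_def by (simp add: distrib_left)
  show "set_borel_measurable lebesgue (ball 0 R) (\<lambda>x. c \<bullet> g x)"
    unfolding set_borel_measurable_def using g(1) ind_meas[of R] by measurable
  show "AE x in lebesgue. x \<in> ball 0 R \<longrightarrow> norm (c \<bullet> g x) \<le> norm (norm c + norm c * (norm (g x))\<^sup>2)"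
  proof (rule AE_I2, rule impI)
    fix x
    have "\<bar>c \<bullet> g x\<bar> \<le> norm c * norm (g x)" by (rule Cauchy_Schwarz_ineq2)
    also have "\<dots> \<le> norm c * (1 + (norm (g x))\<^sup>2)"
      using abs_le_1_sq[of "norm (g x)"] by (intro mult_left_mono) auto
    finally show "norm (c \<bullet> g x) \<le> norm (norm c + norm c * (norm (g x))\<^sup>2)"
      by (simp add: algebra_simps)
  qed
qed




lemma pt_lower:
  fixes M A :: "real^'d^'d"
  assumes ab: "0 < \<alpha>" and M: "M \<in> Mab \<alpha> \<beta>" and A: "A \<in> Mab \<alpha> \<beta>"
  shows "(p + g) \<bullet> (M *v (p + g)) - 2 * ((A *v p) \<bullet> g) \<ge> - ((norm (A *v p))\<^sup>2 / \<alpha>)"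
proof -
  define u where "u = p + g"
  have gu: "g = u - p" by (simp add: u_def)
  have "0 \<le> \<alpha> * (norm p)\<^sup>2" using ab by simp
  also have "\<dots> \<le> p \<bullet> (A *v p)" using Mab_bnd(1)[OF A] .
  finally have Ap: "0 \<le> (A *v p) \<bullet> p" by (simp add: inner_commute)
  have Mu: "\<alpha> * (norm u)\<^sup>2 \<le> u \<bullet> (M *v u)" using Mab_bnd(1)[OF M] .
  have cs: "(A *v p) \<bullet> u \<le> norm (A *v p) * norm u" by (rule norm_cauchy_schwarz)
  have sq: "0 \<le> (\<alpha> * norm u - norm (A *v p))\<^sup>2 / \<alpha>" using ab by simp
  have "(\<alpha> * norm u - norm (A *v p))\<^sup>2 / \<alpha> = \<alpha> * (norm u)\<^sup>2 - 2 * (norm (A *v p) * norm u) + (norm (A *v p))\<^sup>2 / \<alpha>"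
    using ab by (simp add: power2_eq_square field_simps)
  then have "2 * ((A *v p) \<bullet> u) \<le> \<alpha> * (norm u)\<^sup>2 + (norm (A *v p))\<^sup>2 / \<alpha>" using sq cs by linarith
  then show ?thesis using Mu Ap unfolding gu u_def[symmetric] by (simp add: inner_diff_right)
qed

lemma ball_int_const: "(LINT x:ball (0::real^'d) r|lebesgue. c) = measure lebesgue (ball (0::real^'d) r) * c"
proof -
  have "emeasure lebesgue (ball (0::real^'d) r) \<noteq> \<infinity>" using ball_meas(2)[of r] by (simp add: less_top)
  from set_integral_const[OF ball_meas(1)[of r] this, of c] show ?thesis by simp
qed

lemma quad_par_pt:
  fixes M :: "real^'d^'d"
  shows "(u + w) \<bullet> (M *v (u + w)) + (u - w) \<bullet> (M *v (u - w)) = 2 * (u \<bullet> (M *v u)) + 2 * (w \<bullet> (M *v w))"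
  by (simp add: matrix_vector_right_distrib matrix_vector_mult_diff_distrib inner_add_left inner_add_right inner_diff_left inner_diff_right algebra_simps)

lemma par_int:
  fixes f1 f2 f3 f4 :: "'a \<Rightarrow> real"
  assumes "set_integrable M S f1" "set_integrable M S f2" "set_integrable M S f3" "set_integrable M S f4"
    and "\<And>x. f1 x + f2 x = 2 * f3 x + 2 * f4 x"
  shows "(LINT x:S|M. f1 x) + (LINT x:S|M. f2 x) = 2 * (LINT x:S|M. f3 x) + 2 * (LINT x:S|M. f4 x)"
proof -
  have "(LINT x:S|M. f1 x) + (LINT x:S|M. f2 x) = (LINT x:S|M. f1 x + f2 x)"
    using set_integral_add(2)[OF assms(1,2)] by simp
  also have "\<dots> = (LINT x:S|M. 2 * f3 x + 2 * f4 x)" using assms(5) by simp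
  also have "\<dots> = (LINT x:S|M. 2 * f3 x) + (LINT x:S|M. 2 * f4 x)"
    using set_integral_add(2)[OF set_integrable_mult_right[OF assms(3)] set_integrable_mult_right[OF assms(4)]] by simp
  finally show ?thesis by simp
qed

lemma lin3:
  fixes a b :: real
  assumes "X1 + X2 = 2 * x + 2 * x'" "Y1 + Y2 = 2 * y + 2 * y'" "Z1 + Z2 = 2 * z + 2 * z'"
  shows "(a * X1 + a * Y1 - b * Z1) + (a * X2 + a * Y2 - b * Z2) = 2 * (a * x + a * y - b * z) + 2 * (a * x' + a * y' - b * z')"
proof -
  have "(a * X1 + a * Y1 - b * Z1) + (a * X2 + a * Y2 - b * Z2) = a * (X1 + X2) + a * (Y1 + Y2) - b * (Z1 + Z2)"
    by (simp add: algebra_simps)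
  also have "\<dots> = 2 * (a * x + a * y - b * z) + 2 * (a * x' + a * y' - b * z')"
    unfolding assms by (simp add: algebra_simps)
  finally show ?thesis .
qed

lemma lin_aff:
  fixes a b u w :: real
  assumes "u + w = 1"
  shows "a * t + a * (u * y + w * y') - b * (u * z + w * z') = u * (a * t + a * y - b * z) + w * (a * t + a * y' - b * z')"
proof -
  have e: "a * t = u * (a * t) + w * (a * t)" by (metis assms distrib_right mult_1)
  have "u * (a * t + a * y - b * z) + w * (a * t + a * y' - b * z') = (u * (a * t) + w * (a * t)) + a * (u * y + w * y') - b * (u * z + w * z')"
    by (simp add: algebra_simps)
  then show ?thesis using e by simp
qed

lemma V0_add: "in_V0 v g \<Longrightarrow> in_V0 w h \<Longrightarrow> in_V0 (\<lambda>x. v x + w x) (\<lambda>x. g x + h x :: real^'d)"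
  using V0_comb[of v g w h 1 1] by simp

lemma V0_diff: "in_V0 v g \<Longrightarrow> in_V0 w h \<Longrightarrow> in_V0 (\<lambda>x. v x - w x) (\<lambda>x. g x - h x :: real^'d)"
  using V0_comb[of v g w h 1 "-1"] by simp

lemma V0_scale: "in_V0 v g \<Longrightarrow> in_V0 (\<lambda>x. c * v x) (\<lambda>x. c *\<^sub>R g x :: real^'d)"
  using V0_comb[OF _ V0_zero, of v g c 0] by simp

context
  fixes \<alpha> \<beta> R :: real and \<A> :: "real^'d \<Rightarrow> real^'d^'d"
  assumes ab: "0 < \<alpha>" "\<alpha> \<le> \<beta>" and R: "0 < R"
    and AM: "\<A> \<in> borel_measurable lebesgue" "AE x in lebesgue. \<A> x \<in> Mab \<alpha> \<beta>"
begin

definition "mR = measure lebesgue (ball (0::real^'d) R)"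
definition "T1 p g = (LINT x:ball 0 R|lebesgue. (p + g x) \<bullet> (\<A> x *v (p + g x)))"
definition "T2 A g = (LINT x:(UNIV - ball (0::real^'d) R)|lebesgue. g x \<bullet> (A *v g x))"
definition "T3 A p g = (LINT x:ball (0::real^'d) R|lebesgue. (A *v p) \<bullet> g x)"

lemma mR_pos: "0 < mR" unfolding mR_def using ball_measure_pos[OF R] .

lemma Jfun_eq: "Jfun R \<A> A p v g = 1 / (2 * mR) * T1 p g + 1 / (2 * mR) * T2 A g - 1 / mR * T3 A p g"
  unfolding Jfun_def Let_def mR_def T1_def T2_def T3_def by simp

lemma V0_g:
  fixes g :: "real^'d \<Rightarrow> real^'d" shows "in_V0 v g \<Longrightarrow> g \<in> borel_measurable lebesgue \<and> integrable lebesgue (\<lambda>x. (norm (g x))\<^sup>2)"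
  by (simp add: in_V0_def has_weak_gradient_def)

lemma outside_sets: "UNIV - ball (0::real^'d) R \<in> sets lebesgue"
  using ball_meas(1)[of R] by auto

lemma I2_set:
  fixes g :: "real^'d \<Rightarrow> real^'d"
  assumes "A \<in> Mab \<alpha> \<beta>" "g \<in> borel_measurable lebesgue" "integrable lebesgue (\<lambda>x. (norm (g x))\<^sup>2)"
  shows "set_integrable lebesgue (UNIV - ball 0 R) (\<lambda>x. g x \<bullet> (A *v g x))"
  unfolding set_integrable_def
  by (rule integrable_mult_indicator[OF outside_sets I2_int[OF ab assms]])

lemma T2_nonneg:
  fixes g :: "real^'d \<Rightarrow> real^'d"
  assumes "A \<in> Mab \<alpha> \<beta>" "g \<in> borel_measurable lebesgue" "integrable lebesgue (\<lambda>x. (norm (g x))\<^sup>2)"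
  shows "0 \<le> T2 A g"
proof -
  have "(LINT x:(UNIV - ball (0::real^'d) R)|lebesgue. (0::real)) \<le> T2 A g"
    unfolding T2_def
  proof (rule set_integral_mono)
    show "set_integrable lebesgue (UNIV - ball (0::real^'d) R) (\<lambda>x. 0::real)" by (simp add: set_integrable_def)
    show "set_integrable lebesgue (UNIV - ball 0 R) (\<lambda>x. g x \<bullet> (A *v g x))" by (rule I2_set[OF assms])
    show "0 \<le> g x \<bullet> (A *v g x)" for x
      using Mab_bnd(1)[OF assms(1), of "g x"] ab by (smt (verit) mult_nonneg_nonneg zero_le_power2)
  qed
  then show ?thesis by simp
qed

lemma Jfun_lower:
  fixes g :: "real^'d \<Rightarrow> real^'d"
  assumes A: "A \<in> Mab \<alpha> \<beta>" and V: "in_V0 v g"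
  shows "- ((norm (A *v p))\<^sup>2 / (2 * \<alpha>)) \<le> Jfun R \<A> A p v g"
proof -
  note G = V0_g[OF V]
  have i1: "set_integrable lebesgue (ball 0 R) (\<lambda>x. (p + g x) \<bullet> (\<A> x *v (p + g x)))"
    using I1_int[OF ab AM] G by blast
  have i3: "set_integrable lebesgue (ball 0 R) (\<lambda>x. 2 * ((A *v p) \<bullet> g x))"
    using I3_int[of g R "A *v p"] G by auto
  have ic: "set_integrable lebesgue (ball (0::real^'d) R) (\<lambda>x. - ((norm (A *v p))\<^sup>2 / \<alpha>))"
    unfolding set_integrable_def by (simp only: real_scaleR_def) (rule integrable_mult_left, rule integrable_ind_ball)
  have "(LINT x:ball (0::real^'d) R|lebesgue. - ((norm (A *v p))\<^sup>2 / \<alpha>)) \<le>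
        (LINT x:ball 0 R|lebesgue. (p + g x) \<bullet> (\<A> x *v (p + g x)) - 2 * ((A *v p) \<bullet> g x))"
  proof (rule set_integral_mono_AE[OF ic set_integral_diff(1)[OF i1 i3]])
    show "AE x\<in>ball 0 R in lebesgue. - ((norm (A *v p))\<^sup>2 / \<alpha>) \<le> (p + g x) \<bullet> (\<A> x *v (p + g x)) - 2 * ((A *v p) \<bullet> g x)"
      using AM(2) by eventually_elim (use pt_lower[OF ab(1) _ A] in blast)
  qed
  also have "\<dots> = T1 p g - 2 * T3 A p g"
    unfolding T1_def T3_def using set_integral_diff(2)[OF i1 i3] by simp
  finally have "mR * (- ((norm (A *v p))\<^sup>2 / \<alpha>)) \<le> T1 p g - 2 * T3 A p g"
    unfolding mR_def ball_int_const .
  moreover have "0 \<le> T2 A g" using T2_nonneg[OF A] G by blast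
  ultimately have "mR * (- ((norm (A *v p))\<^sup>2 / \<alpha>)) \<le> T1 p g + T2 A g - 2 * T3 A p g" by linarith
  then have "- ((norm (A *v p))\<^sup>2 / \<alpha>) / 2 \<le> (T1 p g + T2 A g - 2 * T3 A p g) / (2 * mR)"
    using mR_pos by (simp add: field_simps)
  moreover have "(T1 p g + T2 A g - 2 * T3 A p g) / (2 * mR) = 1 / (2 * mR) * T1 p g + 1 / (2 * mR) * T2 A g - 1 / mR * T3 A p g"
    using mR_pos by (simp add: field_simps)
  ultimately show ?thesis unfolding Jfun_eq by (simp add: field_simps)
qed

lemma Jfun_zero_upper:
  "Jfun R \<A> A p (\<lambda>x. 0) (\<lambda>x. 0) \<le> \<beta> * (norm p)\<^sup>2 / 2"
proof -
  have i1: "set_integrable lebesgue (ball 0 R) (\<lambda>x. (p + 0) \<bullet> (\<A> x *v (p + 0)))"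
    using I1_int[OF ab AM, of "\<lambda>x. 0" R p] by simp
  have ic: "set_integrable lebesgue (ball (0::real^'d) R) (\<lambda>x. \<beta> * (norm p)\<^sup>2)"
    unfolding set_integrable_def by (simp only: real_scaleR_def) (rule integrable_mult_left, rule integrable_ind_ball)
  have "T1 p (\<lambda>x. 0) \<le> (LINT x:ball (0::real^'d) R|lebesgue. \<beta> * (norm p)\<^sup>2)"
    unfolding T1_def
  proof (rule set_integral_mono_AE[OF i1 ic])
    show "AE x\<in>ball 0 R in lebesgue. (p + 0) \<bullet> (\<A> x *v (p + 0)) \<le> \<beta> * (norm p)\<^sup>2"
      using AM(2) by eventually_elim (use Mab_bnd(2) in auto)
  qed
  also have "\<dots> = mR * (\<beta> * (norm p)\<^sup>2)"
    unfolding mR_def by (rule ball_int_const)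
  finally have "T1 p (\<lambda>x. 0) / (2 * mR) \<le> \<beta> * (norm p)\<^sup>2 / 2"
    using mR_pos by (simp add: field_simps)
  moreover have "T2 A (\<lambda>x. 0) = 0" "T3 A p (\<lambda>x. 0) = 0" by (simp_all add: T2_def T3_def)
  ultimately show ?thesis unfolding Jfun_eq by simp
qed

lemma T1_par:
  assumes "in_V0 v g" "in_V0 w h"
  shows "T1 (p + p') (\<lambda>x. g x + h x) + T1 (p - p') (\<lambda>x. g x - h x) = 2 * T1 p g + 2 * T1 p' h"
  unfolding T1_def
proof (rule par_int)
  note G1 = V0_g[OF assms(1)] and G2 = V0_g[OF assms(2)]
    and G3 = V0_g[OF V0_add[OF assms]] and G4 = V0_g[OF V0_diff[OF assms]]
  show "set_integrable lebesgue (ball 0 R) (\<lambda>x. (p + p' + (g x + h x)) \<bullet> (\<A> x *v (p + p' + (g x + h x))))"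
    using I1_int[OF ab AM] G3 by blast
  show "set_integrable lebesgue (ball 0 R) (\<lambda>x. (p - p' + (g x - h x)) \<bullet> (\<A> x *v (p - p' + (g x - h x))))"
    using I1_int[OF ab AM] G4 by blast
  show "set_integrable lebesgue (ball 0 R) (\<lambda>x. (p + g x) \<bullet> (\<A> x *v (p + g x)))"
    using I1_int[OF ab AM] G1 by blast
  show "set_integrable lebesgue (ball 0 R) (\<lambda>x. (p' + h x) \<bullet> (\<A> x *v (p' + h x)))"
    using I1_int[OF ab AM] G2 by blast
  show "(p + p' + (g x + h x)) \<bullet> (\<A> x *v (p + p' + (g x + h x))) + (p - p' + (g x - h x)) \<bullet> (\<A> x *v (p - p' + (g x - h x))) =
    2 * ((p + g x) \<bullet> (\<A> x *v (p + g x))) + 2 * ((p' + h x) \<bullet> (\<A> x *v (p' + h x)))" for x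
    using quad_par_pt[of "p + g x" "p' + h x" "\<A> x"] by (simp add: algebra_simps)
qed

lemma T2_par:
  assumes A: "A \<in> Mab \<alpha> \<beta>" and "in_V0 v g" "in_V0 w h"
  shows "T2 A (\<lambda>x. g x + h x) + T2 A (\<lambda>x. g x - h x) = 2 * T2 A g + 2 * T2 A h"
  unfolding T2_def
proof (rule par_int)
  note G1 = V0_g[OF assms(2)] and G2 = V0_g[OF assms(3)]
    and G3 = V0_g[OF V0_add[OF assms(2,3)]] and G4 = V0_g[OF V0_diff[OF assms(2,3)]]
  show "set_integrable lebesgue (UNIV - ball 0 R) (\<lambda>x. (g x + h x) \<bullet> (A *v (g x + h x)))"
    using I2_set[OF A] G3 by blast
  show "set_integrable lebesgue (UNIV - ball 0 R) (\<lambda>x. (g x - h x) \<bullet> (A *v (g x - h x)))"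
    using I2_set[OF A] G4 by blast
  show "set_integrable lebesgue (UNIV - ball 0 R) (\<lambda>x. g x \<bullet> (A *v g x))"
    using I2_set[OF A] G1 by blast
  show "set_integrable lebesgue (UNIV - ball 0 R) (\<lambda>x. h x \<bullet> (A *v h x))"
    using I2_set[OF A] G2 by blast
  show "(g x + h x) \<bullet> (A *v (g x + h x)) + (g x - h x) \<bullet> (A *v (g x - h x)) = 2 * (g x \<bullet> (A *v g x)) + 2 * (h x \<bullet> (A *v h x))" for x
    by (rule quad_par_pt)
qed

lemma T3_par:
  assumes "in_V0 v g" "in_V0 w h"
  shows "T3 A (p + p') (\<lambda>x. g x + h x) + T3 A (p - p') (\<lambda>x. g x - h x) = 2 * T3 A p g + 2 * T3 A p' h"
  unfolding T3_def
proof (rule par_int)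
  note G1 = V0_g[OF assms(1)] and G2 = V0_g[OF assms(2)]
    and G3 = V0_g[OF V0_add[OF assms]] and G4 = V0_g[OF V0_diff[OF assms]]
  show "set_integrable lebesgue (ball 0 R) (\<lambda>x. (A *v (p + p')) \<bullet> (g x + h x))"
    using I3_int G3 by blast
  show "set_integrable lebesgue (ball 0 R) (\<lambda>x. (A *v (p - p')) \<bullet> (g x - h x))"
    using I3_int G4 by blast
  show "set_integrable lebesgue (ball 0 R) (\<lambda>x. (A *v p) \<bullet> g x)"
    using I3_int G1 by blast
  show "set_integrable lebesgue (ball 0 R) (\<lambda>x. (A *v p') \<bullet> h x)"
    using I3_int G2 by blast
  show "(A *v (p + p')) \<bullet> (g x + h x) + (A *v (p - p')) \<bullet> (g x - h x) = 2 * ((A *v p) \<bullet> g x) + 2 * ((A *v p') \<bullet> h x)" for x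
    by (simp add: matrix_vector_right_distrib matrix_vector_mult_diff_distrib inner_add_left inner_add_right inner_diff_left inner_diff_right algebra_simps)
qed

lemma Jfun_par:
  assumes A: "A \<in> Mab \<alpha> \<beta>" and V: "in_V0 v g" "in_V0 w h"
  shows "Jfun R \<A> A (p + p') (\<lambda>x. v x + w x) (\<lambda>x. g x + h x) + Jfun R \<A> A (p - p') (\<lambda>x. v x - w x) (\<lambda>x. g x - h x)
    = 2 * Jfun R \<A> A p v g + 2 * Jfun R \<A> A p' w h"
  unfolding Jfun_eq by (rule lin3[OF T1_par[OF V, of p p'] T2_par[OF A V] T3_par[OF V, of A p p']])

lemma Jfun_scale:
  "Jfun R \<A> A (c *\<^sub>R p) (\<lambda>x. c * v x) (\<lambda>x. c *\<^sub>R g x) = c\<^sup>2 * Jfun R \<A> A p v g"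
proof -
  have "T1 (c *\<^sub>R p) (\<lambda>x. c *\<^sub>R g x) = (LINT x:ball 0 R|lebesgue. c\<^sup>2 * ((p + g x) \<bullet> (\<A> x *v (p + g x))))"
    unfolding T1_def by (simp add: scaleR_add_right[symmetric] matrix_vector_mult_scaleR power2_eq_square algebra_simps del: scaleR_add_right)
  also have "\<dots> = c\<^sup>2 * T1 p g" unfolding T1_def by simp
  finally have 1: "T1 (c *\<^sub>R p) (\<lambda>x. c *\<^sub>R g x) = c\<^sup>2 * T1 p g" .
  have "T2 A (\<lambda>x. c *\<^sub>R g x) = (LINT x:(UNIV - ball 0 R)|lebesgue. c\<^sup>2 * (g x \<bullet> (A *v g x)))"
    unfolding T2_def by (simp add: matrix_vector_mult_scaleR power2_eq_square)
  also have "\<dots> = c\<^sup>2 * T2 A g" unfolding T2_def by simp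
  finally have 2: "T2 A (\<lambda>x. c *\<^sub>R g x) = c\<^sup>2 * T2 A g" .
  have "T3 A (c *\<^sub>R p) (\<lambda>x. c *\<^sub>R g x) = (LINT x:ball 0 R|lebesgue. c\<^sup>2 * ((A *v p) \<bullet> g x))"
    unfolding T3_def by (simp add: matrix_vector_mult_scaleR power2_eq_square)
  also have "\<dots> = c\<^sup>2 * T3 A p g" unfolding T3_def by simp
  finally have 3: "T3 A (c *\<^sub>R p) (\<lambda>x. c *\<^sub>R g x) = c\<^sup>2 * T3 A p g" .
  show ?thesis unfolding Jfun_eq 1 2 3 by (simp add: algebra_simps)
qed

lemma Jfun_affine:
  assumes A1: "A1 \<in> Mab \<alpha> \<beta>" and A2: "A2 \<in> Mab \<alpha> \<beta>" and V: "in_V0 v g" and uv: "u + w = 1"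
  shows "Jfun R \<A> (u *\<^sub>R A1 + w *\<^sub>R A2) p v g = u * Jfun R \<A> A1 p v g + w * Jfun R \<A> A2 p v g"
proof -
  note G = V0_g[OF V]
  have i1: "set_integrable lebesgue (UNIV - ball 0 R) (\<lambda>x. g x \<bullet> (A1 *v g x))" using I2_set[OF A1] G by blast
  have i2: "set_integrable lebesgue (UNIV - ball 0 R) (\<lambda>x. g x \<bullet> (A2 *v g x))" using I2_set[OF A2] G by blast
  have "T2 (u *\<^sub>R A1 + w *\<^sub>R A2) g = (LINT x:(UNIV - ball 0 R)|lebesgue. u * (g x \<bullet> (A1 *v g x)) + w * (g x \<bullet> (A2 *v g x)))"
    unfolding T2_def by (simp add: matrix_vector_mult_add_rdistrib scaleR_matrix_vector_assoc[symmetric] inner_add_right)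
  also have "\<dots> = u * T2 A1 g + w * T2 A2 g"
    unfolding T2_def using set_integral_add(2)[OF set_integrable_mult_right[OF i1] set_integrable_mult_right[OF i2]] by simp
  finally have 2: "T2 (u *\<^sub>R A1 + w *\<^sub>R A2) g = u * T2 A1 g + w * T2 A2 g" .
  have j1: "set_integrable lebesgue (ball 0 R) (\<lambda>x. (A1 *v p) \<bullet> g x)" using I3_int G by blast
  have j2: "set_integrable lebesgue (ball 0 R) (\<lambda>x. (A2 *v p) \<bullet> g x)" using I3_int G by blast
  have "T3 (u *\<^sub>R A1 + w *\<^sub>R A2) p g = (LINT x:ball 0 R|lebesgue. u * ((A1 *v p) \<bullet> g x) + w * ((A2 *v p) \<bullet> g x))"
    unfolding T3_def by (simp add: matrix_vector_mult_add_rdistrib scaleR_matrix_vector_assoc[symmetric] inner_add_left)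
  also have "\<dots> = u * T3 A1 p g + w * T3 A2 p g"
    unfolding T3_def using set_integral_add(2)[OF set_integrable_mult_right[OF j1] set_integrable_mult_right[OF j2]] by simp
  finally have 3: "T3 (u *\<^sub>R A1 + w *\<^sub>R A2) p g = u * T3 A1 p g + w * T3 A2 p g" .
  show ?thesis unfolding Jfun_eq 2 3 by (rule lin_aff[OF uv])
qed

end



lemma Mab_convex: "convex (Mab \<alpha> \<beta> :: (real^'d^'d) set)"
  unfolding convex_def
proof (intro ballI allI impI)
  fix A1 A2 :: "real^'d^'d" and u w :: real
  assume A1: "A1 \<in> Mab \<alpha> \<beta>" and A2: "A2 \<in> Mab \<alpha> \<beta>" and uw: "0 \<le> u" "0 \<le> w" "u + w = 1"
  have t: "transpose (u *\<^sub>R A1 + w *\<^sub>R A2) = u *\<^sub>R A1 + w *\<^sub>R A2"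
    using A1 A2 by (simp add: Mab_def transpose_scalar transpose_def vec_eq_iff)
  have "\<alpha> * (norm \<xi>)\<^sup>2 \<le> \<xi> \<bullet> ((u *\<^sub>R A1 + w *\<^sub>R A2) *v \<xi>) \<and> \<xi> \<bullet> ((u *\<^sub>R A1 + w *\<^sub>R A2) *v \<xi>) \<le> \<beta> * (norm \<xi>)\<^sup>2" for \<xi>
  proof -
    have e: "\<xi> \<bullet> ((u *\<^sub>R A1 + w *\<^sub>R A2) *v \<xi>) = u * (\<xi> \<bullet> (A1 *v \<xi>)) + w * (\<xi> \<bullet> (A2 *v \<xi>))"
      by (simp add: matrix_vector_mult_add_rdistrib scaleR_matrix_vector_assoc[symmetric] inner_add_right)
    have b1: "\<alpha> * (norm \<xi>)\<^sup>2 \<le> \<xi> \<bullet> (A1 *v \<xi>)" "\<xi> \<bullet> (A1 *v \<xi>) \<le> \<beta> * (norm \<xi>)\<^sup>2" using Mab_bnd[OF A1] by auto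
    have b2: "\<alpha> * (norm \<xi>)\<^sup>2 \<le> \<xi> \<bullet> (A2 *v \<xi>)" "\<xi> \<bullet> (A2 *v \<xi>) \<le> \<beta> * (norm \<xi>)\<^sup>2" using Mab_bnd[OF A2] by auto
    have "u * (\<alpha> * (norm \<xi>)\<^sup>2) + w * (\<alpha> * (norm \<xi>)\<^sup>2) \<le> u * (\<xi> \<bullet> (A1 *v \<xi>)) + w * (\<xi> \<bullet> (A2 *v \<xi>))"
      using b1 b2 uw by (intro add_mono mult_left_mono) auto
    moreover have "u * (\<xi> \<bullet> (A1 *v \<xi>)) + w * (\<xi> \<bullet> (A2 *v \<xi>)) \<le> u * (\<beta> * (norm \<xi>)\<^sup>2) + w * (\<beta> * (norm \<xi>)\<^sup>2)"
      using b1 b2 uw by (intro add_mono mult_left_mono) auto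
    moreover have "u * c + w * c = c" for c using uw(3) by (metis distrib_right mult_1)
    ultimately show ?thesis unfolding e by metis
  qed
  then show "u *\<^sub>R A1 + w *\<^sub>R A2 \<in> Mab \<alpha> \<beta>" using t by (simp add: Mab_def)
qed

context
  fixes \<alpha> \<beta> R :: real and \<A> :: "real^'d \<Rightarrow> real^'d^'d"
  assumes ab: "0 < \<alpha>" "\<alpha> \<le> \<beta>" and R: "0 < R"
    and AM: "\<A> \<in> borel_measurable lebesgue" "AE x in lebesgue. \<A> x \<in> Mab \<alpha> \<beta>"
begin

lemmas Jl = Jfun_lower[OF ab R AM] and Ju = Jfun_zero_upper[OF ab R AM]
  and Jp = Jfun_par[OF ab R AM] and Js = Jfun_scale[OF ab R AM] and Ja = Jfun_affine[OF ab R AM]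

lemma Jset_ne: "{Jfun R \<A> A p v g | v g. in_V0 v g} \<noteq> {}"
  using V0_zero by blast

lemma Jmin_le:
  assumes A: "A \<in> Mab \<alpha> \<beta>" and V: "in_V0 v g"
  shows "Jmin R \<A> p A \<le> Jfun R \<A> A p v g"
  unfolding Jmin_def
proof (rule cInf_lower)
  show "Jfun R \<A> A p v g \<in> {Jfun R \<A> A p v g | v g. in_V0 v g}" using V by blast
  show "bdd_below {Jfun R \<A> A p v g | v g. in_V0 v g}"
    by (rule bdd_belowI[of _ "- ((norm (A *v p))\<^sup>2 / (2 * \<alpha>))"]) (use Jl[OF A] in blast)
qed

lemma Jmin_ge:
  assumes "\<And>v g. in_V0 v g \<Longrightarrow> c \<le> Jfun R \<A> A p v g"
  shows "c \<le> Jmin R \<A> p A"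
  unfolding Jmin_def by (rule cInf_greatest[OF Jset_ne]) (use assms in blast)

lemma Jmin_bounds:
  assumes A: "A \<in> Mab \<alpha> \<beta>"
  shows "- ((norm (A *v p))\<^sup>2 / (2 * \<alpha>)) \<le> Jmin R \<A> p A" "Jmin R \<A> p A \<le> \<beta> * (norm p)\<^sup>2 / 2"
proof -
  show "- ((norm (A *v p))\<^sup>2 / (2 * \<alpha>)) \<le> Jmin R \<A> p A" by (rule Jmin_ge) (rule Jl[OF A])
  show "Jmin R \<A> p A \<le> \<beta> * (norm p)\<^sup>2 / 2"
    using Jmin_le[OF A V0_zero, of p] Ju[of A p] by linarith
qed

lemma Jmin_par_le:
  assumes A: "A \<in> Mab \<alpha> \<beta>"
  shows "Jmin R \<A> (x + y) A + Jmin R \<A> (x - y) A \<le> 2 * Jmin R \<A> x A + 2 * Jmin R \<A> y A"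
proof -
  let ?q = "\<lambda>p. Jmin R \<A> p A"
  have key: "?q (x + y) + ?q (x - y) \<le> 2 * Jfun R \<A> A x v g + 2 * Jfun R \<A> A y w h"
    if V: "in_V0 v g" "in_V0 w h" for v g w h
  proof -
    have "?q (x + y) + ?q (x - y) \<le> Jfun R \<A> A (x + y) (\<lambda>z. v z + w z) (\<lambda>z. g z + h z) + Jfun R \<A> A (x - y) (\<lambda>z. v z - w z) (\<lambda>z. g z - h z)"
      using Jmin_le[OF A V0_add[OF V]] Jmin_le[OF A V0_diff[OF V]] by (rule add_mono)
    also have "\<dots> = 2 * Jfun R \<A> A x v g + 2 * Jfun R \<A> A y w h" by (rule Jp[OF A V])
    finally show ?thesis .
  qed
  have "(?q (x + y) + ?q (x - y) - 2 * ?q x) / 2 \<le> Jfun R \<A> A y w h" if W: "in_V0 w h" for w h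
  proof -
    have "(?q (x + y) + ?q (x - y) - 2 * Jfun R \<A> A y w h) / 2 \<le> ?q x"
      by (rule Jmin_ge) (use key[OF _ W] in force)
    then show ?thesis by argo
  qed
  then have "(?q (x + y) + ?q (x - y) - 2 * ?q x) / 2 \<le> ?q y" by (rule Jmin_ge)
  then show ?thesis by argo
qed

lemma Jmin_scale_le:
  assumes A: "A \<in> Mab \<alpha> \<beta>" and c: "c \<noteq> 0"
  shows "Jmin R \<A> (c *\<^sub>R x) A \<le> c\<^sup>2 * Jmin R \<A> x A"
proof -
  have c2: "0 < c\<^sup>2" using c by simp
  have "Jmin R \<A> (c *\<^sub>R x) A / c\<^sup>2 \<le> Jmin R \<A> x A"
  proof (rule Jmin_ge)
    fix v :: "real^'d \<Rightarrow> real" and g :: "real^'d \<Rightarrow> real^'d" assume V: "in_V0 v g"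
    have "Jmin R \<A> (c *\<^sub>R x) A \<le> Jfun R \<A> A (c *\<^sub>R x) (\<lambda>z. c * v z) (\<lambda>z. c *\<^sub>R g z)"
      by (rule Jmin_le[OF A V0_scale[OF V]])
    also have "\<dots> = c\<^sup>2 * Jfun R \<A> A x v g" by (rule Js)
    finally show "Jmin R \<A> (c *\<^sub>R x) A / c\<^sup>2 \<le> Jfun R \<A> A x v g"
      using c2 by (simp add: divide_le_eq mult.commute)
  qed
  then show ?thesis using c2 by (simp add: divide_le_eq mult.commute)
qed

lemma Jmin_scale:
  assumes A: "A \<in> Mab \<alpha> \<beta>" and c: "c \<noteq> 0"
  shows "Jmin R \<A> (c *\<^sub>R x) A = c\<^sup>2 * Jmin R \<A> x A"
proof -
  have "Jmin R \<A> x A = Jmin R \<A> ((1 / c) *\<^sub>R (c *\<^sub>R x)) A" using c by simp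
  also have "\<dots> \<le> (1 / c)\<^sup>2 * Jmin R \<A> (c *\<^sub>R x) A" using Jmin_scale_le[OF A, of "1/c" "c *\<^sub>R x"] c by simp
  finally have "c\<^sup>2 * Jmin R \<A> x A \<le> Jmin R \<A> (c *\<^sub>R x) A"
    using c by (simp add: power_divide field_simps)
  then show ?thesis using Jmin_scale_le[OF A c, of x] by linarith
qed

lemma Jmin_par:
  assumes A: "A \<in> Mab \<alpha> \<beta>"
  shows "Jmin R \<A> (x + y) A + Jmin R \<A> (x - y) A = 2 * Jmin R \<A> x A + 2 * Jmin R \<A> y A"
proof -
  have e1: "(x + y) + (x - y) = (2::real) *\<^sub>R x" by (simp add: scaleR_2)
  have e2: "(x + y) - (x - y) = (2::real) *\<^sub>R y" by (simp add: scaleR_2)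
  have "Jmin R \<A> ((x + y) + (x - y)) A + Jmin R \<A> ((x + y) - (x - y)) A \<le> 2 * Jmin R \<A> (x + y) A + 2 * Jmin R \<A> (x - y) A"
    by (rule Jmin_par_le[OF A])
  then have "4 * Jmin R \<A> x A + 4 * Jmin R \<A> y A \<le> 2 * Jmin R \<A> (x + y) A + 2 * Jmin R \<A> (x - y) A"
    unfolding e1 e2 using Jmin_scale[OF A, of 2 x] Jmin_scale[OF A, of 2 y] by simp
  then show ?thesis using Jmin_par_le[OF A, of x y] by linarith
qed

lemma Jmin_quad_bound:
  assumes A: "A \<in> Mab \<alpha> \<beta>"
  obtains K where "\<And>p. \<bar>Jmin R \<A> p A\<bar> \<le> K * (norm p)\<^sup>2"
proof -
  obtain K where K: "\<And>p. norm (A *v p) \<le> norm p * K"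
    using bounded_linear.bounded[OF matrix_vector_mul_bounded_linear[of A]] by blast
  have "\<bar>Jmin R \<A> p A\<bar> \<le> (\<beta> / 2 + K\<^sup>2 / (2 * \<alpha>)) * (norm p)\<^sup>2" for p
  proof -
    have "(norm (A *v p))\<^sup>2 \<le> (norm p * K)\<^sup>2" using K[of p] by (intro power_mono) auto
    then have "(norm (A *v p))\<^sup>2 / (2 * \<alpha>) \<le> K\<^sup>2 / (2 * \<alpha>) * (norm p)\<^sup>2"
      using ab by (simp add: divide_right_mono power_mult_distrib mult.commute)
    moreover have "0 \<le> K\<^sup>2 / (2 * \<alpha>) * (norm p)\<^sup>2" "0 \<le> \<beta> * (norm p)\<^sup>2 / 2" using ab by auto
    ultimately show ?thesis using Jmin_bounds[OF A, of p] by (simp add: abs_le_iff algebra_simps)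
  qed
  then show ?thesis using that by blast
qed

lemma Gmat_char:
  assumes A: "A \<in> Mab \<alpha> \<beta>"
  shows "transpose (Gmat R \<A> A) = Gmat R \<A> A \<and> (\<forall>p. 1/2 * (p \<bullet> (Gmat R \<A> A *v p)) = Jmin R \<A> p A)"
proof -
  obtain K where K: "\<And>p. \<bar>Jmin R \<A> p A\<bar> \<le> K * (norm p)\<^sup>2" using Jmin_quad_bound[OF A] by blast
  obtain G where G: "transpose G = G" "\<forall>p. 1/2 * (p \<bullet> (G *v p)) = Jmin R \<A> p A"
    using quad_form_exists[of "\<lambda>p. Jmin R \<A> p A" K, OF Jmin_par[OF A] K] by blast
  have "Gmat R \<A> A = G"
    unfolding Gmat_def
  proof (rule the_equality)
    show "transpose G = G \<and> (\<forall>p. 1/2 * (p \<bullet> (G *v p)) = Jmin R \<A> p A)" using G by blast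
    show "G' = G" if "transpose G' = G' \<and> (\<forall>p. 1/2 * (p \<bullet> (G' *v p)) = Jmin R \<A> p A)" for G'
    proof (rule sym_quad_unique)
      show "transpose G' = G'" using that by blast
      show "transpose G = G" using G(1) .
      fix p :: "real^'d"
      have "1/2 * (p \<bullet> (G' *v p)) = Jmin R \<A> p A" using that by blast
      moreover have "1/2 * (p \<bullet> (G *v p)) = Jmin R \<A> p A" using G(2) by blast
      ultimately show "p \<bullet> (G' *v p) = p \<bullet> (G *v p)" by simp
    qed
  qed
  then show ?thesis using G by simp
qed

lemma trace_Gmat:
  assumes A: "A \<in> Mab \<alpha> \<beta>"
  shows "trace (Gmat R \<A> A) = (\<Sum>i\<in>UNIV. 2 * Jmin R \<A> (axis i 1) A)"
proof -
  have "Gmat R \<A> A $ i $ i = 2 * Jmin R \<A> (axis i 1) A" for i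
  proof -
    have "1/2 * (axis i 1 \<bullet> (Gmat R \<A> A *v axis i 1)) = Jmin R \<A> (axis i 1) A"
      using Gmat_char[OF A] by blast
    moreover have "axis i 1 \<bullet> (Gmat R \<A> A *v axis i 1) = Gmat R \<A> A $ i $ i"
      by (simp add: inner_axis' matrix_vector_mul_component inner_axis)
    ultimately show ?thesis by simp
  qed
  then show ?thesis by (simp add: trace_def)
qed

lemma Jmin_concave:
  assumes A1: "A1 \<in> Mab \<alpha> \<beta>" and A2: "A2 \<in> Mab \<alpha> \<beta>" and uw: "0 \<le> u" "0 \<le> w" "u + w = 1"
  shows "u * Jmin R \<A> p A1 + w * Jmin R \<A> p A2 \<le> Jmin R \<A> p (u *\<^sub>R A1 + w *\<^sub>R A2)"
proof (rule Jmin_ge)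
  fix v :: "real^'d \<Rightarrow> real" and g :: "real^'d \<Rightarrow> real^'d" assume V: "in_V0 v g"
  have "u * Jmin R \<A> p A1 + w * Jmin R \<A> p A2 \<le> u * Jfun R \<A> A1 p v g + w * Jfun R \<A> A2 p v g"
    using Jmin_le[OF A1 V] Jmin_le[OF A2 V] uw by (intro add_mono mult_left_mono) auto
  also have "\<dots> = Jfun R \<A> (u *\<^sub>R A1 + w *\<^sub>R A2) p v g" by (rule Ja[OF A1 A2 V uw(3), symmetric])
  finally show "u * Jmin R \<A> p A1 + w * Jmin R \<A> p A2 \<le> Jfun R \<A> (u *\<^sub>R A1 + w *\<^sub>R A2) p v g" .
qed

end

theorem lemma1:
  fixes \<alpha> \<beta> R :: real and \<A> :: "real^'d \<Rightarrow> real^'d^'d"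
  assumes "0 < \<alpha>" and "\<alpha> \<le> \<beta>" and "0 < R"
    and "\<A> \<in> borel_measurable lebesgue"
    and "AE x in lebesgue. \<A> x \<in> Mab \<alpha> \<beta>"
  shows "concave_on (Mab \<alpha> \<beta>) (\<lambda>A. trace (Gmat R \<A> A))"
  unfolding concave_on_iff
proof (intro conjI ballI allI impI)
  note H = assms
  show "convex (Mab \<alpha> \<beta>)" by (rule Mab_convex)
  fix A1 A2 :: "real^'d^'d" and u w :: real
  assume A1: "A1 \<in> Mab \<alpha> \<beta>" and A2: "A2 \<in> Mab \<alpha> \<beta>" and uw: "0 \<le> u" "0 \<le> w" "u + w = 1"
  have A3: "u *\<^sub>R A1 + w *\<^sub>R A2 \<in> Mab \<alpha> \<beta>"
    using Mab_convex A1 A2 uw unfolding convex_def by blast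
  have "u * trace (Gmat R \<A> A1) + w * trace (Gmat R \<A> A2)
      = (\<Sum>i\<in>UNIV. 2 * (u * Jmin R \<A> (axis i 1) A1 + w * Jmin R \<A> (axis i 1) A2))"
    unfolding trace_Gmat[OF H A1] trace_Gmat[OF H A2]
    by (simp add: sum_distrib_left sum.distrib algebra_simps)
  also have "\<dots> \<le> (\<Sum>i\<in>UNIV. 2 * Jmin R \<A> (axis i 1) (u *\<^sub>R A1 + w *\<^sub>R A2))"
  proof (rule sum_mono)
    fix i :: 'd
    show "2 * (u * Jmin R \<A> (axis i 1) A1 + w * Jmin R \<A> (axis i 1) A2) \<le> 2 * Jmin R \<A> (axis i 1) (u *\<^sub>R A1 + w *\<^sub>R A2)"
      using Jmin_concave[OF H A1 A2 uw, of "axis i 1"] by (rule mult_left_mono) simp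
  qed
  also have "\<dots> = trace (Gmat R \<A> (u *\<^sub>R A1 + w *\<^sub>R A2))"
    by (rule trace_Gmat[OF H A3, symmetric])
  finally show "u * trace (Gmat R \<A> A1) + w * trace (Gmat R \<A> A2) \<le> trace (Gmat R \<A> (u *\<^sub>R A1 + w *\<^sub>R A2))" .
qed


end
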